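(* Let $n$ be a positive integer, $f:\mathbb{Z}_n\to\mathbb C$, $1\le m\le n$ an integer, and $M=\{0,1,\dots,m-1\}\subseteq\mathbb{Z}_n$. Then \[\sum_{a\in\mathbb{Z}_n}\sum_{b\in\mathbb{Z}_n}|f(a+bM)|^2\ge\sum_{r\in\mathbb{Z}_n}|\widehat f(r)|^2\cdot\max\left(\frac{m^2\gcd(r,n)}{n},\,m\right).\]
   Context: The Fourier transform of $f:\mathbb{Z}_n\to\mathbb C$ is $\widehat f(s)=\sum_{x\in\mathbb{Z}_n}f(x)e^{-2\pi i xs/n}$. For $a,b\in\mathbb{Z}_n$, $a+bM$ denotes the multiset $\{a+bx: x\in M\}$ and $f(a+bM)=\sum_{x\in M}f(a+bx)$ (counted with multiplicity). For $r\in\mathbb{Z}_n$, $\gcd(r,n)$ is the gcd of $n$ with any integer representative of $r$ (so $\gcd(0,n)=n$). *)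

theory Defs
  imports "HOL-Analysis.Analysis"
begin

text \<open>Z_n is represented by the residues {0..<n} (n > 0); arithmetic is taken mod n.
  A function f : Z_n -> C is a function nat => complex of which only the values on {0..<n} matter.\<close>

definition dft :: "nat \<Rightarrow> (nat \<Rightarrow> complex) \<Rightarrow> nat \<Rightarrow> complex" where
  "dft n f s = (\<Sum>x<n. f x * cis (- 2 * pi * real x * real s / real n))"

definition dilate_sum :: "nat \<Rightarrow> (nat \<Rightarrow> complex) \<Rightarrow> nat \<Rightarrow> nat \<Rightarrow> nat \<Rightarrow> complex" where
  "dilate_sum n f m a b = (\<Sum>x<m. f ((a + b * x) mod n))"

end

theory Submission imports Defs "HOL-Library.Real_Mod" begin

definition ee :: "nat \<Rightarrow> int \<Rightarrow> complex" where
  "ee n k = cis (2 * pi * of_int k / real n)"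

lemma ee_add: "ee n (a + b) = ee n a * ee n b"
  unfolding ee_def by (simp add: cis_mult add_divide_distrib distrib_left)

lemma ee_neg: "ee n (- a) = cnj (ee n a)"
  unfolding ee_def by (simp add: cis_cnj)

lemma ee_0[simp]: "ee n 0 = 1"
  unfolding ee_def by simp

lemma ee_period: "0 < n \<Longrightarrow> ee n (a + int n * j) = ee n a"
proof -
  assume n: "0 < n"
  have "ee n (int n * j) = cis (2 * pi * of_int j)"
    unfolding ee_def using n by (simp add: field_simps)
  also have "\<dots> = 1" by (simp add: cos_int_2pin sin_int_2pin cis.ctr complex_eq_iff)
  finally show ?thesis by (simp add: ee_add)
qed

lemma ee_mod: "0 < n \<Longrightarrow> ee n (a mod int n) = ee n a"
  by (metis ee_period mod_mult_div_eq add.commute mult.commute minus_mod_eq_mult_div)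

lemma ee_pow: "ee n k ^ r = ee n (int r * k)"
  unfolding ee_def Complex.DeMoivre by (simp add: field_simps)

lemma sum_roots:
  assumes n: "0 < n"
  shows "(\<Sum>r<n. ee n (int r * k)) = (if int n dvd k then of_nat n else 0)"
proof (cases "int n dvd k")
  case True
  then obtain j where "k = int n * j" by auto
  then have "ee n (int r * k) = 1" for r
    using ee_period[OF n, of 0 "int r * j"] by (simp add: ac_simps)
  then show ?thesis using True by simp
next
  case False
  have ne: "ee n k \<noteq> 1"
  proof
    assume "ee n k = 1"
    then obtain j where "2 * pi * of_int k / real n = of_int j * (2 * pi)"
      unfolding ee_def cis_eq_1_iff by auto
    then have "real_of_int k = of_int j * real n" using n by (simp add: field_simps)
    then have "k = j * int n" by (metis of_int_eq_iff of_int_mult of_int_of_nat_eq)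
    then show False using False by simp
  qed
  have "ee n k ^ n = 1"
    using ee_pow[of n k n] ee_period[OF n, of 0 k] by simp
  then have "(\<Sum>r<n. ee n k ^ r) = 0" using ne by (simp add: sum_gp_strict)
  then show ?thesis using False by (simp add: ee_pow)
qed

lemma dft_ee: "dft n h s = (\<Sum>x<n. h x * ee n (- (int x * int s)))"
  unfolding dft_def ee_def by (simp add: field_simps)


lemma dvd_diff_lt: "u < n \<Longrightarrow> v < n \<Longrightarrow> (int n dvd int v - int u) \<longleftrightarrow> u = v"
proof -
  assume "u < n" "v < n"
  then have "int v mod int n = int v" "int u mod int n = int u" by simp_all
  then show ?thesis by (metis mod_eq_dvd_iff of_nat_eq_iff)
qed

lemma parseval:
  assumes n: "0 < n"
  shows "(\<Sum>r<n. (cmod (dft n h r))\<^sup>2) = real n * (\<Sum>u<n. (cmod (h u))\<^sup>2)"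
proof -
  have step: "dft n h r * cnj (dft n h r) =
      (\<Sum>u<n. \<Sum>v<n. h u * cnj (h v) * ee n (int r * (int v - int u)))" for r
  proof -
    have "cnj (dft n h r) = (\<Sum>v<n. cnj (h v) * ee n (int v * int r))"
      unfolding dft_ee by (simp add: ee_neg[symmetric])
    then have "dft n h r * cnj (dft n h r) = (\<Sum>u<n. h u * ee n (- (int u * int r))) * (\<Sum>v<n. cnj (h v) * ee n (int v * int r))"
      by (simp add: dft_ee)
    also have "\<dots> = (\<Sum>u<n. \<Sum>v<n. h u * ee n (- (int u * int r)) * (cnj (h v) * ee n (int v * int r)))"
      by (rule sum_product)
    also have "\<dots> = (\<Sum>u<n. \<Sum>v<n. h u * cnj (h v) * ee n (int r * (int v - int u)))"
    proof (intro sum.cong refl)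
      fix u v
      have "ee n (- (int u * int r)) * ee n (int v * int r) = ee n (int r * (int v - int u))"
        by (simp add: ee_add[symmetric] algebra_simps)
      then show "h u * ee n (- (int u * int r)) * (cnj (h v) * ee n (int v * int r)) = h u * cnj (h v) * ee n (int r * (int v - int u))"
        by (metis mult.commute mult.left_commute)
    qed
    finally show ?thesis .
  qed
  have "complex_of_real (\<Sum>r<n. (cmod (dft n h r))\<^sup>2) = (\<Sum>r<n. dft n h r * cnj (dft n h r))"
    unfolding of_real_sum complex_norm_square ..
  also have "\<dots> = (\<Sum>r<n. \<Sum>u<n. \<Sum>v<n. h u * cnj (h v) * ee n (int r * (int v - int u)))"
    using step by simp
  also have "\<dots> = (\<Sum>u<n. \<Sum>v<n. \<Sum>r<n. h u * cnj (h v) * ee n (int r * (int v - int u)))"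
    by (subst sum.swap, rule sum.cong[OF refl], rule sum.swap)
  also have "\<dots> = (\<Sum>u<n. \<Sum>v<n. h u * cnj (h v) * (if u = v then of_nat n else 0))"
    by (simp add: sum_distrib_left[symmetric] sum_roots[OF n] dvd_diff_lt)
  also have "\<dots> = (\<Sum>u<n. h u * cnj (h u) * of_nat n)"
    by (simp add: if_distrib cong: if_cong)
  also have "\<dots> = complex_of_real (real n * (\<Sum>u<n. (cmod (h u))\<^sup>2))"
    unfolding of_real_mult of_real_sum complex_norm_square by (simp add: sum_distrib_left ac_simps)
  finally show ?thesis by (simp only: of_real_eq_iff)
qed


lemma bij_shift: "0 < (n::nat) \<Longrightarrow> bij_betw (\<lambda>a. (a + c) mod n) {..<n} {..<n}"
proof -
  assume n: "0 < n"
  have inj: "inj_on (\<lambda>a. (a + c) mod n) {..<n}"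
  proof (rule inj_onI)
    fix x y :: nat assume "x \<in> {..<n}" "y \<in> {..<n}" "(x + c) mod n = (y + c) mod n"
    then have "int (x + c) mod int n = int (y + c) mod int n" "x < n" "y < n"
      by (simp_all only: of_nat_mod[symmetric] lessThan_iff)
    then have "int n dvd int (x + c) - int (y + c)" "x < n" "y < n"
      using mod_eq_dvd_iff by blast+
    then have "int n dvd int x - int y" "x < n" "y < n" by simp_all
    then show "x = y" using dvd_diff_lt by blast
  qed
  have "(\<lambda>a. (a + c) mod n) ` {..<n} = {..<n}"
  proof (rule endo_inj_surj[OF finite_lessThan _ inj])
    show "(\<lambda>a. (a + c) mod n) ` {..<n} \<subseteq> {..<n}" using n by auto
  qed
  then show ?thesis using inj by (simp add: bij_betw_def)
qed

lemma shift:
  assumes n: "0 < n"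
  shows "(\<Sum>a<n. h ((a + c) mod n) * ee n (- (int a * int r)))
         = ee n (int c * int r) * (\<Sum>u<n. h u * ee n (- (int u * int r)))"
proof -
  have "ee n (int c * int r) * (\<Sum>u<n. h u * ee n (- (int u * int r)))
      = (\<Sum>u<n. h u * ee n (int c * int r - int u * int r))"
    by (simp add: sum_distrib_left ee_add[symmetric] ac_simps)
  also have "\<dots> = (\<Sum>a<n. h ((a + c) mod n) * ee n (int c * int r - int ((a + c) mod n) * int r))"
    by (rule sum.reindex_bij_betw[OF bij_shift[OF n], symmetric])
  also have "\<dots> = (\<Sum>a<n. h ((a + c) mod n) * ee n (- (int a * int r)))"
  proof (intro sum.cong refl)
    fix a
    have e: "int (a + c) = int n * int ((a + c) div n) + int ((a + c) mod n)"
      by (metis div_mult_mod_eq of_nat_add of_nat_mult mult.commute)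
    have "int c * int r - int ((a + c) mod n) * int r = - (int a * int r) + int n * (int ((a + c) div n) * int r)"
      using arg_cong[OF e, of "\<lambda>z. z * int r"] by (simp add: algebra_simps)
    then have "ee n (int c * int r - int ((a + c) mod n) * int r) = ee n (- (int a * int r))"
      using ee_period[OF n] by presburger
    then show "h ((a + c) mod n) * ee n (int c * int r - int ((a + c) mod n) * int r) = h ((a + c) mod n) * ee n (- (int a * int r))"
      by simp
  qed
  finally show ?thesis by simp
qed

lemma dft_dilate:
  assumes n: "0 < n"
  shows "dft n (\<lambda>a. dilate_sum n f m a b) r = dft n f r * (\<Sum>x<m. ee n (int b * int x * int r))"
proof -
  have "dft n (\<lambda>a. dilate_sum n f m a b) r = (\<Sum>a<n. \<Sum>x<m. f ((a + b * x) mod n) * ee n (- (int a * int r)))"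
    unfolding dft_ee dilate_sum_def by (simp add: sum_distrib_right)
  also have "\<dots> = (\<Sum>x<m. \<Sum>a<n. f ((a + b * x) mod n) * ee n (- (int a * int r)))"
    by (rule sum.swap)
  also have "\<dots> = (\<Sum>x<m. ee n (int (b * x) * int r) * dft n f r)"
    by (simp add: shift[OF n] dft_ee)
  also have "\<dots> = dft n f r * (\<Sum>x<m. ee n (int b * int x * int r))"
    by (simp add: sum_distrib_left ac_simps)
  finally show ?thesis .
qed


definition CC :: "nat \<Rightarrow> nat \<Rightarrow> nat \<Rightarrow> real" where
  "CC n m r = (\<Sum>x<m. \<Sum>y<m. if int n dvd int r * (int x - int y) then 1 else 0)"

lemma Ssum:
  assumes n: "0 < n"
  shows "(\<Sum>b<n. (cmod (\<Sum>x<m. ee n (int b * int x * int r)))\<^sup>2) = real n * CC n m r"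
proof -
  have sq: "complex_of_real ((cmod (\<Sum>x<m. ee n (int b * int x * int r)))\<^sup>2)
     = (\<Sum>x<m. \<Sum>y<m. ee n (int b * (int r * (int x - int y))))" for b
  proof -
    have "complex_of_real ((cmod (\<Sum>x<m. ee n (int b * int x * int r)))\<^sup>2)
        = (\<Sum>x<m. ee n (int b * int x * int r)) * (\<Sum>y<m. ee n (- (int b * int y * int r)))"
      unfolding complex_norm_square by (simp add: ee_neg)
    also have "\<dots> = (\<Sum>x<m. \<Sum>y<m. ee n (int b * int x * int r) * ee n (- (int b * int y * int r)))"
      by (rule sum_product)
    also have "\<dots> = (\<Sum>x<m. \<Sum>y<m. ee n (int b * (int r * (int x - int y))))"
      by (intro sum.cong refl) (simp add: ee_add[symmetric] algebra_simps)
    finally show ?thesis .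
  qed
  have "complex_of_real (\<Sum>b<n. (cmod (\<Sum>x<m. ee n (int b * int x * int r)))\<^sup>2)
      = (\<Sum>b<n. \<Sum>x<m. \<Sum>y<m. ee n (int b * (int r * (int x - int y))))"
    unfolding of_real_sum sq ..
  also have "\<dots> = (\<Sum>x<m. \<Sum>y<m. \<Sum>b<n. ee n (int b * (int r * (int x - int y))))"
    by (subst sum.swap, rule sum.cong[OF refl], rule sum.swap)
  also have "\<dots> = (\<Sum>x<m. \<Sum>y<m. if int n dvd int r * (int x - int y) then of_nat n else 0)"
    by (simp add: sum_roots[OF n])
  also have "\<dots> = complex_of_real (real n * CC n m r)"
    unfolding CC_def of_real_mult of_real_sum sum_distrib_left
    by (intro sum.cong refl) simp
  finally show ?thesis by (simp only: of_real_eq_iff)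
qed

lemma CC_ge_m: "real m \<le> CC n m r"
proof -
  have "real m = (\<Sum>x<m. (1::real))" by simp
  also have "\<dots> \<le> CC n m r"
    unfolding CC_def
  proof (rule sum_mono)
    fix x assume x: "x \<in> {..<m}"
    have "(1::real) = (\<lambda>y. if int n dvd int r * (int x - int y) then 1 else 0) x" by simp
    also have "\<dots> \<le> (\<Sum>y<m. if int n dvd int r * (int x - int y) then 1 else (0::real))"
      by (rule member_le_sum) (use x in auto)
    finally show "1 \<le> (\<Sum>y<m. if int n dvd int r * (int x - int y) then 1 else (0::real))" .
  qed
  finally show ?thesis .
qed

lemma CC_ge2:
  assumes n: "0 < n"
  shows "real m ^ 2 * real (gcd r n) \<le> real n * CC n m r"
proof -
  define d where "d = gcd r n"
  define q where "q = n div d"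
  have d0: "0 < d" unfolding d_def using n by simp
  have nq: "n = d * q" unfolding q_def d_def by simp
  have q0: "0 < q" using n nq by (cases q) auto
  have ddvd: "int d dvd int r" unfolding d_def by simp
  define c where "c i = (\<Sum>x<m. if x mod q = i then 1 else (0::real))" for i
  define D where "D = (\<Sum>x<m. \<Sum>y<m. if x mod q = y mod q then 1 else (0::real))"
  have DC: "D \<le> CC n m r"
    unfolding D_def CC_def
  proof (intro sum_mono)
    fix x y
    show "(if x mod q = y mod q then 1 else (0::real)) \<le> (if int n dvd int r * (int x - int y) then 1 else 0)"
    proof (cases "x mod q = y mod q")
      case True
      then have "int x mod int q = int y mod int q" by (metis of_nat_mod)
      then have "int q dvd int x - int y" using mod_eq_dvd_iff by blast
      then have "int d * int q dvd int r * (int x - int y)" using ddvd by (rule mult_dvd_mono[rotated])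
      then show ?thesis using nq True by simp
    qed simp
  qed
  have key: "(if x mod q = y mod q then 1 else (0::real)) =
      (\<Sum>i<q. (if x mod q = i then 1 else 0) * (if y mod q = i then 1 else 0))" for x y
  proof -
    have "(\<Sum>i<q. (if x mod q = i then 1 else (0::real)) * (if y mod q = i then 1 else 0))
        = (\<Sum>i<q. if i = x mod q then (if y mod q = i then 1 else 0) else 0)"
      by (intro sum.cong refl) auto
    also have "\<dots> = (if y mod q = x mod q then 1 else 0)"
      using q0 by (simp add: sum.delta')
    finally show ?thesis by auto
  qed
  have Dsq: "D = (\<Sum>i<q. (c i)\<^sup>2)"
  proof -
    have "D = (\<Sum>x<m. \<Sum>y<m. \<Sum>i<q. (if x mod q = i then 1 else (0::real)) * (if y mod q = i then 1 else 0))"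
      unfolding D_def key ..
    also have "\<dots> = (\<Sum>x<m. \<Sum>i<q. \<Sum>y<m. (if x mod q = i then 1 else (0::real)) * (if y mod q = i then 1 else 0))"
      by (rule sum.cong[OF refl], rule sum.swap)
    also have "\<dots> = (\<Sum>i<q. \<Sum>x<m. \<Sum>y<m. (if x mod q = i then 1 else (0::real)) * (if y mod q = i then 1 else 0))"
      by (rule sum.swap)
    also have "\<dots> = (\<Sum>i<q. (c i)\<^sup>2)"
      unfolding c_def power2_eq_square sum_product ..
    finally show ?thesis .
  qed
  have csum: "(\<Sum>i<q. c i) = real m"
  proof -
    have "(\<Sum>i<q. c i) = (\<Sum>x<m. \<Sum>i<q. if x mod q = i then 1 else (0::real))"
      unfolding c_def by (rule sum.swap)
    also have "\<dots> = (\<Sum>x<m. (1::real))"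
      using q0 by (intro sum.cong refl) (simp add: sum.delta)
    finally show ?thesis by simp
  qed
  have CS: "(\<Sum>i<q. c i * 1)\<^sup>2 \<le> (\<Sum>i<q. (c i)\<^sup>2) * (\<Sum>i<q. 1\<^sup>2)"
    by (rule Cauchy_Schwarz_ineq_sum)
  then have "real m ^ 2 \<le> D * real q" using csum Dsq by simp
  then have "real m ^ 2 * real d \<le> D * real q * real d" using d0 by (simp add: mult_right_mono)
  also have "\<dots> = real n * D" using nq by simp
  also have "\<dots> \<le> real n * CC n m r" using DC by (simp add: mult_left_mono)
  finally show ?thesis unfolding d_def .
qed


theorem lemma4p2:
  fixes n m :: nat and f :: "nat \<Rightarrow> complex"
  assumes "0 < n" and "1 \<le> m" and "m \<le> n"
  shows "(\<Sum>a<n. \<Sum>b<n. (cmod (dilate_sum n f m a b))\<^sup>2)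
         \<ge> (\<Sum>r<n. (cmod (dft n f r))\<^sup>2 *
               max (real m ^ 2 * real (gcd r n) / real n) (real m))"
proof -
  note n = assms(1)
  define S where "S b r = (\<Sum>x<m. ee n (int b * int x * int r))" for b r
  have per_b: "real n * (\<Sum>a<n. (cmod (dilate_sum n f m a b))\<^sup>2)
      = (\<Sum>r<n. (cmod (dft n f r))\<^sup>2 * (cmod (S b r))\<^sup>2)" for b
    using parseval[OF n, of "\<lambda>a. dilate_sum n f m a b"]
    by (simp add: dft_dilate[OF n] S_def norm_mult power_mult_distrib)
  have "real n * (\<Sum>a<n. \<Sum>b<n. (cmod (dilate_sum n f m a b))\<^sup>2)
      = (\<Sum>b<n. real n * (\<Sum>a<n. (cmod (dilate_sum n f m a b))\<^sup>2))"
    by (subst sum.swap) (simp add: sum_distrib_left)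
  also have "\<dots> = (\<Sum>b<n. \<Sum>r<n. (cmod (dft n f r))\<^sup>2 * (cmod (S b r))\<^sup>2)"
    using per_b by simp
  also have "\<dots> = (\<Sum>r<n. (cmod (dft n f r))\<^sup>2 * (\<Sum>b<n. (cmod (S b r))\<^sup>2))"
    by (subst sum.swap) (simp add: sum_distrib_left)
  also have "\<dots> = real n * (\<Sum>r<n. (cmod (dft n f r))\<^sup>2 * CC n m r)"
    unfolding S_def Ssum[OF n] by (simp add: sum_distrib_left ac_simps)
  finally have eq: "real n * (\<Sum>a<n. \<Sum>b<n. (cmod (dilate_sum n f m a b))\<^sup>2)
      = real n * (\<Sum>r<n. (cmod (dft n f r))\<^sup>2 * CC n m r)" .
  have "(\<Sum>r<n. (cmod (dft n f r))\<^sup>2 * max (real m ^ 2 * real (gcd r n) / real n) (real m))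
      \<le> (\<Sum>r<n. (cmod (dft n f r))\<^sup>2 * CC n m r)"
  proof (rule sum_mono, rule mult_left_mono)
    fix r
    have "real m ^ 2 * real (gcd r n) / real n \<le> CC n m r"
      using CC_ge2[OF n, of m r] n by (simp add: divide_le_eq mult.commute)
    then show "max (real m ^ 2 * real (gcd r n) / real n) (real m) \<le> CC n m r"
      using CC_ge_m by simp
  qed simp
  also have "\<dots> = (\<Sum>a<n. \<Sum>b<n. (cmod (dilate_sum n f m a b))\<^sup>2)"
    using eq n by simp
  finally show ?thesis .
qed

end
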